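(* Let $\rho_n,\rho\in\mathcal{P}(\mathbb{T}^d)$ with $\rho_n\to\rho$ in $W_2$, and suppose that $D^2u[\rho_n]\succeq-\lambda_0^n$ with $\lambda_0^n\in[0,\infty)$ and $\lambda_0^n\to\lambda_0\in[0,\infty)$. Then $D^2u[\rho]\succeq-\lambda_0$.
   Context: $\mathbb{T}^d=\mathbb{R}^d/\mathbb{Z}^d$; $W_2$ is the quadratic Wasserstein distance on $\mathcal{P}(\mathbb{T}^d)$ for the flat torus distance. $V,W\in C^{2,1}(\mathbb{T}^d)$. For $\rho$ with strictly positive density, $u[\rho]=\log\rho+V+W*\rho$, $W*\rho(x)=\int W(x-y)\,d\rho(y)$. $D^2u[\rho]\succeq-\lambda$ (with $\lambda<\infty$) means that $\rho$ has a positive density, $u[\rho]$ is well-defined and $D^2u[\rho]+\lambda I_d\succeq0$ in the weak (semi-convex) sense. *)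

theory Defs
  imports "HOL-Probability.Probability"
begin

text \<open>Points of T^d are represented by points of
  R^d (type real^'d), functions on T^d by Z^d-periodic functions on R^d, and
  probability measures on T^d by Borel probability measures on R^d concentrated
  on the fundamental cell [0,1)^d.\<close>

definition int_lattice :: "(real^'d) set" where
  "int_lattice = {k. \<forall>i. k $ i \<in> \<int>}"

definition unit_cell :: "(real^'d) set" where
  "unit_cell = {x. \<forall>i. 0 \<le> x $ i \<and> x $ i < 1}"

definition periodic :: "(real^'d \<Rightarrow> 'b) \<Rightarrow> bool" where
  "periodic f \<longleftrightarrow> (\<forall>x k. k \<in> int_lattice \<longrightarrow> f (x + k) = f x)"

definition torus_dist :: "real^'d \<Rightarrow> real^'d \<Rightarrow> real" where
  "torus_dist x y = Inf ((\<lambda>k. norm (x - y - k)) ` int_lattice)"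

definition torus_prob :: "(real^'d) measure \<Rightarrow> bool" where
  "torus_prob \<mu> \<longleftrightarrow> prob_space \<mu> \<and> sets \<mu> = sets borel \<and> emeasure \<mu> (- unit_cell) = 0"

definition couplings :: "(real^'d) measure \<Rightarrow> (real^'d) measure \<Rightarrow> (((real^'d) \<times> (real^'d)) measure) set" where
  "couplings \<mu> \<nu> = {\<pi>. prob_space \<pi> \<and> sets \<pi> = sets borel
       \<and> distr \<pi> borel fst = \<mu> \<and> distr \<pi> borel snd = \<nu>}"

definition W2 :: "(real^'d) measure \<Rightarrow> (real^'d) measure \<Rightarrow> real" where
  "W2 \<mu> \<nu> = sqrt (Inf ((\<lambda>\<pi>. \<integral>p. (torus_dist (fst p) (snd p))\<^sup>2 \<partial>\<pi>) ` couplings \<mu> \<nu>))"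

definition C21_torus :: "(real^'d \<Rightarrow> real) \<Rightarrow> bool" where
  "C21_torus f \<longleftrightarrow> periodic f \<and>
     (\<exists>g H L. (\<forall>x. (f has_derivative (\<lambda>h. g x \<bullet> h)) (at x))
            \<and> (\<forall>x. (g has_derivative (\<lambda>h. H x *v h)) (at x))
            \<and> (\<forall>x y. norm (H x - H y) \<le> L * norm (x - y)))"

definition conv :: "(real^'d \<Rightarrow> real) \<Rightarrow> (real^'d) measure \<Rightarrow> real^'d \<Rightarrow> real" where
  "conv W \<rho> x = (\<integral>y. W (x - y) \<partial>\<rho>)"

definition pos_density :: "(real^'d) measure \<Rightarrow> (real^'d \<Rightarrow> real) \<Rightarrow> bool" where
  "pos_density \<rho> f \<longleftrightarrow> f \<in> borel_measurable borel \<and> periodic f \<and> (\<forall>x. 0 < f x)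
      \<and> \<rho> = density lborel (\<lambda>x. ennreal (indicator unit_cell x * f x))"

definition u_pot :: "(real^'d \<Rightarrow> real) \<Rightarrow> (real^'d \<Rightarrow> real) \<Rightarrow> (real^'d) measure
      \<Rightarrow> (real^'d \<Rightarrow> real) \<Rightarrow> real^'d \<Rightarrow> real" where
  "u_pot V W \<rho> f x = ln (f x) + V x + conv W \<rho> x"

text \<open>D^2 u[rho] \<succeq> -lambda in the weak (semi-convex) sense: rho has a strictly
  positive density f such that u[rho] + lambda |x|^2/2 is convex on R^d.\<close>
definition hess_lower_bound :: "(real^'d \<Rightarrow> real) \<Rightarrow> (real^'d \<Rightarrow> real) \<Rightarrow> (real^'d) measure
      \<Rightarrow> real \<Rightarrow> bool" where
  "hess_lower_bound V W \<rho> lam \<longleftrightarrow> (\<exists>f. pos_density \<rho> f \<and>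
      convex_on UNIV (\<lambda>x. u_pot V W \<rho> f x + lam / 2 * (norm x)\<^sup>2))"

end

theory Submission
  imports Defs "HOL-Complex_Analysis.Great_Picard"
begin


lemma lattice_add: "a \<in> int_lattice \<Longrightarrow> b \<in> int_lattice \<Longrightarrow> a + b \<in> int_lattice"
  by (auto simp: int_lattice_def)
lemma lattice_uminus: "a \<in> int_lattice \<Longrightarrow> - a \<in> int_lattice"
  by (auto simp: int_lattice_def)
lemma lattice_diff: "a \<in> int_lattice \<Longrightarrow> b \<in> int_lattice \<Longrightarrow> a - b \<in> int_lattice"
  by (auto simp: int_lattice_def)
lemma lattice_zero: "0 \<in> int_lattice"
  by (auto simp: int_lattice_def)
lemma lattice_scale: "k \<in> int_lattice \<Longrightarrow> m \<in> \<int> \<Longrightarrow> m *\<^sub>R k \<in> int_lattice"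
  by (auto simp: int_lattice_def)
lemma lattice_axis: "axis i 1 \<in> int_lattice"
  by (auto simp: int_lattice_def axis_def)

lemma countable_lattice: "countable (int_lattice :: (real^'d) set)"
proof -
  have "countable (\<int> :: real set)" unfolding Ints_def by simp
  then have "countable {V::real^'d. \<forall>i. V $ i \<in> \<int>}"
    by (intro countable_vector) auto
  then show ?thesis by (simp add: int_lattice_def)
qed

lemma periodic_diff: "periodic f \<Longrightarrow> k \<in> int_lattice \<Longrightarrow> f (x - k) = f x"
  unfolding periodic_def by (metis diff_add_cancel)

definition flr :: "real^'d \<Rightarrow> real^'d" where "flr x = (\<chi> i. of_int \<lfloor>x$i\<rfloor>)"

lemma flr_lattice: "flr x \<in> int_lattice"
  by (auto simp: int_lattice_def flr_def)

lemma sub_flr_cell: "x - flr x \<in> unit_cell"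
  by (auto simp: unit_cell_def flr_def) linarith

lemma cell_cbox: "unit_cell \<subseteq> cbox 0 (1::real^'d)"
  by (auto simp: unit_cell_def mem_box_cart) (meson less_imp_le)

lemma cell_diff_norm: "x \<in> unit_cell \<Longrightarrow> y \<in> unit_cell \<Longrightarrow> norm (x - y :: real^'d) \<le> CARD('d)"
proof -
  assume x: "x \<in> unit_cell" and y: "y \<in> unit_cell"
  have "norm (x - y) \<le> (\<Sum>i\<in>UNIV. \<bar>(x - y) $ i\<bar>)" by (rule norm_le_l1_cart)
  also have "\<dots> \<le> (\<Sum>i\<in>(UNIV::'d set). 1)"
  proof (intro sum_mono)
    fix i
    have "0 \<le> x$i \<and> x$i<1" "0 \<le> y$i \<and> y$i < 1" using x y by (auto simp: unit_cell_def)
    then show "\<bar>(x - y) $ i\<bar> \<le> 1" by (auto simp: abs_le_iff)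
  qed
  finally show ?thesis by simp
qed

lemma zero_cell: "0 \<in> unit_cell" by (auto simp: unit_cell_def)

lemma td_nonneg: "0 \<le> torus_dist x y"
  unfolding torus_dist_def using lattice_zero by (intro cInf_greatest) auto

lemma td_le: "k \<in> int_lattice \<Longrightarrow> torus_dist x y \<le> norm (x - y - k)"
  unfolding torus_dist_def by (rule cInf_lower) (auto intro: bdd_belowI[of _ 0])

lemma td_bound: "torus_dist x (y::real^'d) \<le> CARD('d)"
proof -
  have "torus_dist x y \<le> norm (x - y - flr (x - y))" by (rule td_le[OF flr_lattice])
  also have "\<dots> = norm ((x - y - flr (x - y)) - 0)" by simp
  also have "\<dots> \<le> CARD('d)" by (rule cell_diff_norm[OF sub_flr_cell zero_cell])
  finally show ?thesis .
qed

lemma td_meas: "(\<lambda>p. torus_dist (fst p) (snd p :: real^'d)) \<in> borel_measurable borel"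
  unfolding torus_dist_def
  by (intro borel_measurable_cINF_real countable_lattice borel_measurable_continuous_onI continuous_intros)

lemma periodic_lip_td:
  assumes "periodic h" "0 \<le> L" "\<And>x y. \<bar>h x - h y\<bar> \<le> L * norm (x - y)"
  shows "\<bar>h x - h y\<bar> \<le> L * torus_dist x y"
proof (cases "L = 0")
  case True then show ?thesis using assms(3)[of x y] by simp
next
  case False
  then have L: "L > 0" using assms(2) by simp
  have "\<bar>h x - h y\<bar> / L \<le> torus_dist x y"
    unfolding torus_dist_def
  proof (rule cInf_greatest)
    show "(\<lambda>k. norm (x - y - k)) ` int_lattice \<noteq> {}" using lattice_zero by auto
  next
    fix z assume "z \<in> (\<lambda>k. norm (x - y - k)) ` int_lattice"
    then obtain k where k: "k \<in> int_lattice" "z = norm (x - y - k)" by auto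
    have "h y = h (y + k)" using assms(1) k(1) by (simp add: periodic_def)
    then have "\<bar>h x - h y\<bar> \<le> L * norm (x - (y + k))" using assms(3)[of x "y + k"] by simp
    then show "\<bar>h x - h y\<bar> / L \<le> z" using L k(2) by (simp add: field_simps algebra_simps)
  qed
  then show ?thesis using L by (simp add: field_simps)
qed

lemma coupling_exists:
  fixes \<mu> \<nu> :: "(real^'d) measure"
  assumes "torus_prob \<mu>" "torus_prob \<nu>"
  shows "\<mu> \<Otimes>\<^sub>M \<nu> \<in> couplings \<mu> \<nu>"
proof -
  have pm: "prob_space \<mu>" "prob_space \<nu>" "sets \<mu> = sets borel" "sets \<nu> = sets borel"
    using assms by (auto simp: torus_prob_def)
  have sets: "sets (\<mu> \<Otimes>\<^sub>M \<nu>) = sets (borel :: ((real^'d) \<times> (real^'d)) measure)"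
    using sets_pair_measure_cong[OF pm(3) pm(4)] borel_prod[where 'a="real^'d" and 'b="real^'d"] by metis
  have f: "distr (\<mu> \<Otimes>\<^sub>M \<nu>) borel fst = \<mu>"
  proof -
    have "distr (\<mu> \<Otimes>\<^sub>M \<nu>) borel fst = distr (\<mu> \<Otimes>\<^sub>M \<nu>) \<mu> fst"
      by (rule distr_cong) (simp_all add: pm)
    also have "\<dots> = \<mu>" by (rule prob_space.distr_pair_fst[OF pm(2)])
    finally show ?thesis .
  qed
  have s: "distr (\<mu> \<Otimes>\<^sub>M \<nu>) borel snd = \<nu>"
  proof (rule measure_eqI)
    show "sets (distr (\<mu> \<Otimes>\<^sub>M \<nu>) borel snd) = sets \<nu>" using pm by simp
  next
    fix A assume A: "A \<in> sets (distr (\<mu> \<Otimes>\<^sub>M \<nu>) borel snd)"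
    then have Ab: "A \<in> sets borel" by simp
    have ms: "snd \<in> measurable (\<mu> \<Otimes>\<^sub>M \<nu>) borel"
      using measurable_snd[of \<mu> \<nu>] measurable_cong_sets[OF refl pm(4)] by blast
    interpret \<nu>: prob_space \<nu> by (rule pm(2))
    interpret \<mu>: prob_space \<mu> by (rule pm(1))
    have "emeasure (distr (\<mu> \<Otimes>\<^sub>M \<nu>) borel snd) A = emeasure (\<mu> \<Otimes>\<^sub>M \<nu>) (snd -` A \<inter> space (\<mu> \<Otimes>\<^sub>M \<nu>))"
      by (rule emeasure_distr[OF ms Ab])
    also have "snd -` A \<inter> space (\<mu> \<Otimes>\<^sub>M \<nu>) = space \<mu> \<times> A"
      using pm by (auto simp: space_pair_measure cong: sets_eq_imp_space_eq)
    also have "emeasure (\<mu> \<Otimes>\<^sub>M \<nu>) (space \<mu> \<times> A) = emeasure \<mu> (space \<mu>) * emeasure \<nu> A"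
      using Ab pm by (intro \<nu>.emeasure_pair_measure_Times) auto
    also have "\<dots> = emeasure \<nu> A" by (simp add: \<mu>.emeasure_space_1)
    finally show "emeasure (distr (\<mu> \<Otimes>\<^sub>M \<nu>) borel snd) A = emeasure \<nu> A" .
  qed
  show ?thesis unfolding couplings_def using sets f s prob_space_pair[OF pm(1,2)] by auto
qed

lemma coupling_bound:
  fixes \<mu> \<nu> :: "(real^'d) measure" and h :: "real^'d \<Rightarrow> real"
  assumes \<pi>: "\<pi> \<in> couplings \<mu> \<nu>"
    and hm: "h \<in> borel_measurable borel" and hB: "\<And>x. \<bar>h x\<bar> \<le> B"
    and hL: "\<And>x y. \<bar>h x - h y\<bar> \<le> L * torus_dist x y" and e: "e > 0"
  shows "\<bar>(\<integral>x. h x \<partial>\<mu>) - (\<integral>x. h x \<partial>\<nu>)\<bar>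
           \<le> e + (L\<^sup>2 / (4 * e) + 1) * (\<integral>p. (torus_dist (fst p) (snd p))\<^sup>2 \<partial>\<pi>)"
proof -
  have ps: "prob_space \<pi>" and sp: "sets \<pi> = sets borel" and d1: "distr \<pi> borel fst = \<mu>"
    and d2: "distr \<pi> borel snd = \<nu>" using \<pi> by (auto simp: couplings_def)
  interpret prob_space \<pi> by (rule ps)
  have mf: "fst \<in> measurable \<pi> borel"
    using measurable_cong_sets[OF sp refl] borel_measurable_continuous_onI[OF continuous_on_fst[OF continuous_on_id]]
    by blast
  have ms: "snd \<in> measurable \<pi> borel"
    using measurable_cong_sets[OF sp refl] borel_measurable_continuous_onI[OF continuous_on_snd[OF continuous_on_id]]
    by blast
  have i1: "(\<integral>x. h x \<partial>\<mu>) = (\<integral>p. h (fst p) \<partial>\<pi>)"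
    using integral_distr[OF mf hm] d1 by simp
  have i2: "(\<integral>x. h x \<partial>\<nu>) = (\<integral>p. h (snd p) \<partial>\<pi>)"
    using integral_distr[OF ms hm] d2 by simp
  have hf: "(\<lambda>p. h (fst p)) \<in> borel_measurable \<pi>" using measurable_comp[OF mf hm] by (simp add: comp_def)
  have hs: "(\<lambda>p. h (snd p)) \<in> borel_measurable \<pi>" using measurable_comp[OF ms hm] by (simp add: comp_def)
  have int1: "integrable \<pi> (\<lambda>p. h (fst p))"
    using hf hB by (intro integrable_const_bound[where B=B]) auto
  have int2: "integrable \<pi> (\<lambda>p. h (snd p))"
    using hs hB by (intro integrable_const_bound[where B=B]) auto
  have dm: "(\<lambda>p. (torus_dist (fst p) (snd p))\<^sup>2) \<in> borel_measurable \<pi>"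
  proof -
    have "(\<lambda>p. torus_dist (fst p) (snd p :: real^'d)) \<in> borel_measurable \<pi>"
      using measurable_cong_sets[OF sp refl] td_meas by blast
    then show ?thesis by (rule borel_measurable_power)
  qed
  have intd: "integrable \<pi> (\<lambda>p. (torus_dist (fst p) (snd p))\<^sup>2)"
  proof (rule integrable_const_bound[where B="(real CARD('d))\<^sup>2"])
    show "AE x in \<pi>. norm ((torus_dist (fst x) (snd x))\<^sup>2) \<le> (real CARD('d))\<^sup>2"
      by (intro AE_I2) (simp add: power_mono td_bound td_nonneg)
  qed (rule dm)
  let ?K = "L\<^sup>2 / (4 * e) + 1"
  have pt: "\<bar>h (fst p) - h (snd p)\<bar> \<le> e + ?K * (torus_dist (fst p) (snd p))\<^sup>2" for p
  proof -
    define t where "t = torus_dist (fst p) (snd p)"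
    have "\<bar>h (fst p) - h (snd p)\<bar> \<le> L * t" using hL t_def by simp
    also have "L * t \<le> e + L\<^sup>2 / (4 * e) * t\<^sup>2"
    proof -
      have "0 \<le> (2 * e - L * t)\<^sup>2" by simp
      then have h1: "4 * e * (L * t) \<le> 4 * e * e + L\<^sup>2 * t\<^sup>2"
        by (simp add: power2_eq_square algebra_simps)
      have "L\<^sup>2 / (4 * e) * t\<^sup>2 = (L\<^sup>2 * t\<^sup>2) / (4 * e)" by simp
      moreover have "L * t \<le> e + (L\<^sup>2 * t\<^sup>2) / (4 * e)"
        using e h1 by (simp add: field_simps)
      ultimately show ?thesis by simp
    qed
    also have "\<dots> \<le> e + ?K * t\<^sup>2" by (simp add: distrib_right)
    finally show ?thesis by (simp add: t_def)
  qed
  have "\<bar>(\<integral>x. h x \<partial>\<mu>) - (\<integral>x. h x \<partial>\<nu>)\<bar> = \<bar>\<integral>p. h (fst p) - h (snd p) \<partial>\<pi>\<bar>"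
    using i1 i2 int1 int2 by simp
  also have "\<dots> \<le> (\<integral>p. e + ?K * (torus_dist (fst p) (snd p))\<^sup>2 \<partial>\<pi>)"
    using int1 int2 intd pt by (intro integral_abs_bound_integral) auto
  also have "\<dots> = e + ?K * (\<integral>p. (torus_dist (fst p) (snd p))\<^sup>2 \<partial>\<pi>)"
    using intd by (simp add: prob_space)
  finally show ?thesis .
qed

lemma W2_weak:
  fixes \<mu>s :: "nat \<Rightarrow> (real^'d) measure" and h :: "real^'d \<Rightarrow> real"
  assumes tp: "\<And>n. torus_prob (\<mu>s n)" "torus_prob \<mu>" and W: "(\<lambda>n. W2 (\<mu>s n) \<mu>) \<longlonglongrightarrow> 0"
    and hm: "h \<in> borel_measurable borel" and hB: "\<And>x. \<bar>h x\<bar> \<le> B"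
    and hL: "\<And>x y. \<bar>h x - h y\<bar> \<le> L * torus_dist x y"
  shows "(\<lambda>n. \<integral>x. h x \<partial>\<mu>s n) \<longlonglongrightarrow> (\<integral>x. h x \<partial>\<mu>)"
proof -
  define cost where "cost \<pi> = (\<integral>p. (torus_dist (fst p) (snd p))\<^sup>2 \<partial>\<pi>)" for \<pi> :: "((real^'d) \<times> (real^'d)) measure"
  define C where "C n = Inf (cost ` couplings (\<mu>s n) \<mu>)" for n
  have ne: "couplings (\<mu>s n) \<mu> \<noteq> {}" for n using coupling_exists tp by blast
  have cost_nn: "0 \<le> cost \<pi>" for \<pi> unfolding cost_def by (intro integral_nonneg_AE) simp
  have C_nn: "0 \<le> C n" for n unfolding C_def using ne cost_nn by (intro cInf_greatest) auto
  have W2eq: "W2 (\<mu>s n) \<mu> = sqrt (C n)" for n by (simp add: W2_def C_def cost_def)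
  have "(\<lambda>n. (W2 (\<mu>s n) \<mu>)\<^sup>2) \<longlonglongrightarrow> 0\<^sup>2" by (intro tendsto_power W)
  then have Clim: "C \<longlonglongrightarrow> 0" using C_nn by (simp add: W2eq)
  have key: "\<bar>(\<integral>x. h x \<partial>\<mu>s n) - (\<integral>x. h x \<partial>\<mu>)\<bar> \<le> e + (L\<^sup>2 / (4 * e) + 1) * C n"
    if e: "e > 0" for e n
  proof -
    let ?K = "L\<^sup>2 / (4 * e) + 1"
    have K: "?K > 0" using e by (simp add: add_nonneg_pos)
    have "(\<bar>(\<integral>x. h x \<partial>\<mu>s n) - (\<integral>x. h x \<partial>\<mu>)\<bar> - e) / ?K \<le> C n"
      unfolding C_def
    proof (rule cInf_greatest)
      show "cost ` couplings (\<mu>s n) \<mu> \<noteq> {}" using ne by auto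
    next
      fix c assume "c \<in> cost ` couplings (\<mu>s n) \<mu>"
      then obtain \<pi> where \<pi>: "\<pi> \<in> couplings (\<mu>s n) \<mu>" "c = cost \<pi>" by auto
      have "\<bar>(\<integral>x. h x \<partial>\<mu>s n) - (\<integral>x. h x \<partial>\<mu>)\<bar> \<le> e + ?K * cost \<pi>"
        unfolding cost_def by (rule coupling_bound[OF \<pi>(1) hm hB hL e])
      then show "(\<bar>(\<integral>x. h x \<partial>\<mu>s n) - (\<integral>x. h x \<partial>\<mu>)\<bar> - e) / ?K \<le> c"
        using K \<pi>(2) by (simp add: field_simps)
    qed
    then show ?thesis using K by (simp add: field_simps)
  qed
  show ?thesis
  proof (rule LIMSEQ_I)
    fix r :: real assume r: "0 < r"
    let ?K = "L\<^sup>2 / (4 * (r/2)) + 1"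
    have K: "?K > 0" using r by (simp add: add_nonneg_pos)
    from LIMSEQ_D[OF Clim, of "r / 2 / ?K"] r K obtain no where no: "\<And>n. n \<ge> no \<Longrightarrow> norm (C n - 0) < r / 2 / ?K"
      by auto
    show "\<exists>no. \<forall>n\<ge>no. norm ((\<integral>x. h x \<partial>\<mu>s n) - (\<integral>x. h x \<partial>\<mu>)) < r"
    proof (intro exI allI impI)
      fix n assume "n \<ge> no"
      then have "C n < r / 2 / ?K" using no[of n] C_nn[of n] by simp
      then have "?K * C n < r / 2" using K by (simp add: field_simps)
      moreover have "\<bar>(\<integral>x. h x \<partial>\<mu>s n) - (\<integral>x. h x \<partial>\<mu>)\<bar> \<le> r/2 + ?K * C n"
        using key[of "r/2" n] r by simp
      ultimately show "norm ((\<integral>x. h x \<partial>\<mu>s n) - (\<integral>x. h x \<partial>\<mu>)) < r" by simp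
    qed
  qed
qed

lemma periodic_bounded:
  fixes V :: "real^'d \<Rightarrow> real"
  assumes "periodic V" "continuous_on UNIV V"
  obtains B where "\<And>x. \<bar>V x\<bar> \<le> B"
proof -
  have "compact (V ` cbox 0 1)"
    using assms(2) by (intro compact_continuous_image) (auto intro: continuous_on_subset)
  then obtain B where B: "\<And>y. y \<in> V ` cbox 0 1 \<Longrightarrow> norm y \<le> B"
    using compact_imp_bounded bounded_iff by metis
  have "\<bar>V x\<bar> \<le> B" for x
  proof -
    have "V x = V (x - flr x)" using periodic_diff[OF assms(1) flr_lattice] by simp
    moreover have "x - flr x \<in> cbox 0 1" using sub_flr_cell cell_cbox by blast
    ultimately show ?thesis using B by fastforce
  qed
  then show ?thesis using that by blast
qed

lemma C21_props:
  fixes V :: "real^'d \<Rightarrow> real"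
  assumes "C21_torus V"
  shows "periodic V" "continuous_on UNIV V" "V \<in> borel_measurable borel"
    "\<exists>B. \<forall>x. \<bar>V x\<bar> \<le> B" "\<exists>L\<ge>0. \<forall>x y. \<bar>V x - V y\<bar> \<le> L * norm (x - y)"
proof -
  show per: "periodic V" using assms by (simp add: C21_torus_def)
  obtain g H where dV: "\<And>x. (V has_derivative (\<lambda>h. g x \<bullet> h)) (at x)"
    and dg: "\<And>x. (g has_derivative (\<lambda>h. H x *v h)) (at x)"
    using assms unfolding C21_torus_def by blast
  show cV: "continuous_on UNIV V"
    using dV by (intro continuous_at_imp_continuous_on) (auto intro: has_derivative_continuous)
  then show "V \<in> borel_measurable borel" by (rule borel_measurable_continuous_onI)
  obtain B where B: "\<And>x. \<bar>V x\<bar> \<le> B" using periodic_bounded[OF per cV] by blast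
  then show "\<exists>B. \<forall>x. \<bar>V x\<bar> \<le> B" by blast
  have cg: "continuous_on UNIV g"
    using dg by (intro continuous_at_imp_continuous_on) (auto intro: has_derivative_continuous)
  let ?S = "cbox (- 1) (2::real^'d)"
  have "compact (g ` ?S)"
    using cg by (intro compact_continuous_image) (auto intro: continuous_on_subset)
  then obtain G where G: "\<And>y. y \<in> g ` ?S \<Longrightarrow> norm y \<le> G"
    using compact_imp_bounded bounded_iff by metis
  have lipS: "\<bar>V x - V y\<bar> \<le> G * norm (x - y)" if "x \<in> ?S" "y \<in> ?S" for x y
  proof -
    have "norm (V x - V y) \<le> G * norm (x - y)"
    proof (rule differentiable_bound[OF convex_box(1)])
      show "(V has_derivative (\<lambda>h. g z \<bullet> h)) (at z within ?S)" for z
        using dV has_derivative_at_withinI by blast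
      show "onorm (\<lambda>h. g z \<bullet> h) \<le> G" if "z \<in> ?S" for z
      proof (rule onorm_le)
        fix h
        have "norm (g z \<bullet> h) \<le> norm (g z) * norm h" using Cauchy_Schwarz_ineq2 by simp
        also have "\<dots> \<le> G * norm h" using G that by (intro mult_right_mono) auto
        finally show "norm (g z \<bullet> h) \<le> G * norm h" .
      qed
    qed (use that in auto)
    then show ?thesis by simp
  qed
  have G0: "0 \<le> G" using G[of "g 0"] by (auto simp: mem_box_cart) (meson norm_ge_zero order_trans)
  define L where "L = max G (2 * B)"
  have "\<bar>V x - V y\<bar> \<le> L * norm (x - y)" for x y
  proof (cases "norm (x - y) < 1")
    case True
    define x' where "x' = x - flr x"
    define y' where "y' = y - flr x"
    have x'c: "x' \<in> unit_cell" using sub_flr_cell x'_def by simp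
    have comp: "\<bar>(y' - x') $ i\<bar> < 1" for i
      using True component_le_norm_cart[of "y - x" i] by (simp add: x'_def y'_def norm_minus_commute)
    have "x' \<in> ?S" "y' \<in> ?S"
      using x'c comp by (auto simp: mem_box_cart unit_cell_def abs_less_iff) (smt (verit))+
    then have "\<bar>V x' - V y'\<bar> \<le> G * norm (x' - y')" by (rule lipS)
    moreover have "V x' = V x" "V y' = V y" using periodic_diff[OF per flr_lattice] by (simp_all add: x'_def y'_def)
    moreover have "x' - y' = x - y" by (simp add: x'_def y'_def)
    ultimately have "\<bar>V x - V y\<bar> \<le> G * norm (x - y)" by simp
    also have "\<dots> \<le> L * norm (x - y)" by (simp add: L_def mult_right_mono)
    finally show ?thesis .
  next
    case False
    have "\<bar>V x - V y\<bar> \<le> 2 * B" using B[of x] B[of y] by simp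
    also have "\<dots> \<le> L * 1" by (simp add: L_def)
    also have "\<dots> \<le> L * norm (x - y)" using False G0 by (intro mult_left_mono) (auto simp: L_def)
    finally show ?thesis .
  qed
  moreover have "L \<ge> 0" using G0 by (simp add: L_def)
  ultimately show "\<exists>L\<ge>0. \<forall>x y. \<bar>V x - V y\<bar> \<le> L * norm (x - y)" by blast
qed



lemma norm_e2: fixes x k :: "real^'d" shows "(norm (x + h *\<^sub>R k))\<^sup>2 = (norm x)\<^sup>2 + 2 * h * (x \<bullet> k) + h * h * (norm k)\<^sup>2"
  by (simp only: power2_norm_eq_inner) (simp add: inner_add_left inner_add_right inner_commute algebra_simps)
lemma norm_e1: fixes x k :: "real^'d" shows "(norm (x + k))\<^sup>2 = (norm x)\<^sup>2 + 2 * (x \<bullet> k) + (norm k)\<^sup>2"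
  by (simp add: power2_norm_eq_inner inner_add_left inner_add_right inner_commute)
lemma norm_e3: fixes x k :: "real^'d" shows "(1 - h) * (norm x)\<^sup>2 + h * (norm (x + k))\<^sup>2 - (norm (x + h *\<^sub>R k))\<^sup>2 = h * (1 - h) * (norm k)\<^sup>2"
  unfolding norm_e1 norm_e2 by (simp add: algebra_simps power2_eq_square)
lemma arith_aux:
  assumes "A + l / 2 * B \<le> (1 - h) * (ux + l / 2 * X) + h * (ux + l / 2 * Y)" "(1-h)*X + h * Y - B = h * (1 - h) * K"
  shows "A \<le> ux + l / 2 * (h * (1 - h)) * (K::real)"
proof -
  have "(1 - h) * (ux + l / 2 * X) + h * (ux + l / 2 * Y) = ux + l/2 * ((1-h)*X + h*Y)" by (simp add: field_simps)
  also have "(1-h)*X + h*Y = B + h * (1 - h) * K" using assms(2) by linarith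
  also have "ux + l/2 * (B + h * (1 - h) * K) = ux + l/2 * B + l/2 * (h * (1 - h) * K)" by (simp add: distrib_left)
  finally show ?thesis using assms(1) by (simp add: mult.assoc)
qed

lemma semiconv_step:
  fixes u :: "real^'d \<Rightarrow> real"
  assumes cv: "convex_on UNIV (\<lambda>x. u x + lam / 2 * (norm x)\<^sup>2)" and per: "periodic u"
    and k: "k \<in> int_lattice" and h: "0 \<le> h" "h \<le> 1"
  shows "u (x + h *\<^sub>R k) \<le> u x + lam / 2 * (h * (1 - h)) * (norm k)\<^sup>2"
proof -
  have "u ((1 - h) *\<^sub>R x + h *\<^sub>R (x + k)) + lam / 2 * (norm ((1 - h) *\<^sub>R x + h *\<^sub>R (x + k)))\<^sup>2
        \<le> (1 - h) * (u x + lam / 2 * (norm x)\<^sup>2) + h * (u (x + k) + lam / 2 * (norm (x + k))\<^sup>2)"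
    using convex_onD[OF cv h] by simp
  moreover have "(1 - h) *\<^sub>R x + h *\<^sub>R (x + k) = x + h *\<^sub>R k" by (simp add: algebra_simps)
  moreover have "u (x + k) = u x" using per k by (simp add: periodic_def)
  ultimately have "u (x + h *\<^sub>R k) + lam / 2 * (norm (x + h *\<^sub>R k))\<^sup>2
        \<le> (1 - h) * (u x + lam / 2 * (norm x)\<^sup>2) + h * (u x + lam / 2 * (norm (x + k))\<^sup>2)" by simp
  then show ?thesis by (rule arith_aux[OF _ norm_e3])
qed

lemma semiconv_line:
  fixes u :: "real^'d \<Rightarrow> real"
  assumes cv: "convex_on UNIV (\<lambda>x. u x + lam / 2 * (norm x)\<^sup>2)" and per: "periodic u"
    and k: "k \<in> int_lattice" and lam: "0 \<le> lam"
  shows "\<bar>u (x + t *\<^sub>R k) - u x\<bar> \<le> lam / 2 * \<bar>t\<bar> * (norm k)\<^sup>2"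
proof -
  define m where "m = real_of_int \<lfloor>t\<rfloor>"
  define h where "h = t - m"
  have h01: "0 \<le> h" "h \<le> 1" using h_def m_def by linarith+
  have "m \<in> \<int>" unfolding m_def by (rule Ints_of_int)
  then have mk: "m *\<^sub>R k \<in> int_lattice" using k by (intro lattice_scale)
  have "u (x + t *\<^sub>R k) = u ((x + h *\<^sub>R k) + m *\<^sub>R k)" by (simp add: h_def algebra_simps)
  also have "\<dots> = u (x + h *\<^sub>R k)" using per mk by (simp add: periodic_def)
  finally have ut: "u (x + t *\<^sub>R k) = u (x + h *\<^sub>R k)" .
  have up: "u (x + h *\<^sub>R k) \<le> u x + lam / 2 * (h * (1 - h)) * (norm k)\<^sup>2"
    by (rule semiconv_step[OF cv per k h01])
  have "u ((x + h *\<^sub>R k) + (1 - h) *\<^sub>R k) \<le> u (x + h *\<^sub>R k) + lam / 2 * ((1 - h) * (1 - (1 - h))) * (norm k)\<^sup>2"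
    using h01 by (intro semiconv_step[OF cv per k]) auto
  moreover have "u ((x + h *\<^sub>R k) + (1 - h) *\<^sub>R k) = u x"
  proof -
    have "(x + h *\<^sub>R k) + (1 - h) *\<^sub>R k = x + k" by (simp add: algebra_simps)
    then show ?thesis using per k unfolding periodic_def by metis
  qed
  ultimately have lo: "u x \<le> u (x + h *\<^sub>R k) + lam / 2 * (h * (1 - h)) * (norm k)\<^sup>2"
    by (simp add: algebra_simps)
  have hh: "h * (1 - h) \<le> \<bar>t\<bar>"
  proof (cases "t \<ge> 0")
    case True
    then have "m \<ge> 0" by (simp add: m_def)
    then have "h \<le> t" using h_def by simp
    moreover have "h * (1 - h) \<le> h" using h01 by (simp add: mult_left_le)
    ultimately show ?thesis using True by simp
  next
    case False
    then have "\<lfloor>t\<rfloor> \<le> -1" by (simp add: floor_le_iff)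
    then have "m \<le> -1" unfolding m_def by simp
    then have "1 - h \<le> - t" using h_def by simp
    moreover have "h * (1 - h) \<le> 1 - h" using h01 by (simp add: mult_left_le_one_le)
    ultimately show ?thesis using False by simp
  qed
  have "lam / 2 * (h * (1 - h)) * (norm k)\<^sup>2 \<le> lam / 2 * \<bar>t\<bar> * (norm k)\<^sup>2"
    using hh lam by (intro mult_right_mono mult_left_mono) auto
  then show ?thesis using up lo ut by linarith
qed

lemma semiconv_lip:
  fixes u :: "real^'d \<Rightarrow> real"
  assumes cv: "convex_on UNIV (\<lambda>x. u x + lam / 2 * (norm x)\<^sup>2)" and per: "periodic u"
    and lam: "0 \<le> lam"
  shows "\<bar>u x - u y\<bar> \<le> lam / 2 * CARD('d) * norm (x - y)"
proof -
  have main: "\<forall>x y. (\<forall>i. i \<notin> S \<longrightarrow> x$i = y$i) \<longrightarrow> \<bar>u x - u y\<bar> \<le> lam / 2 * (\<Sum>i\<in>S. \<bar>x$i - y$i\<bar>)"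
    if "finite S" for S :: "'d set"
    using that
  proof (induction S rule: finite_induct)
    case empty
    then show ?case by (simp add: vec_eq_iff[symmetric])
  next
    case (insert i S)
    show ?case
    proof (intro allI impI)
      fix x y :: "real^'d"
      assume xy: "\<forall>j. j \<notin> insert i S \<longrightarrow> x$j = y$j"
      define z where "z = x + (y$i - x$i) *\<^sub>R axis i 1"
      have zi: "z$i = y$i" by (simp add: z_def axis_def)
      have zj: "j \<noteq> i \<Longrightarrow> z$j = x$j" for j by (simp add: z_def axis_def)
      have "\<forall>j. j \<notin> S \<longrightarrow> z$j = y$j" using xy zi zj by (metis insert_iff)
      then have IH: "\<bar>u z - u y\<bar> \<le> lam / 2 * (\<Sum>j\<in>S. \<bar>z$j - y$j\<bar>)" using insert.IH by blast
      have "(\<Sum>j\<in>S. \<bar>z$j - y$j\<bar>) = (\<Sum>j\<in>S. \<bar>x$j - y$j\<bar>)"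
        using insert.hyps(2) zj by (intro sum.cong refl) metis
      then have IH': "\<bar>u z - u y\<bar> \<le> lam / 2 * (\<Sum>j\<in>S. \<bar>x$j - y$j\<bar>)" using IH by simp
      have "\<bar>u z - u x\<bar> \<le> lam / 2 * \<bar>y$i - x$i\<bar> * (norm (axis i (1::real)))\<^sup>2"
        unfolding z_def by (rule semiconv_line[OF cv per lattice_axis lam])
      then have "\<bar>u z - u x\<bar> \<le> lam / 2 * \<bar>x$i - y$i\<bar>" by (simp add: abs_minus_commute)
      then have "\<bar>u x - u y\<bar> \<le> lam / 2 * \<bar>x$i - y$i\<bar> + lam / 2 * (\<Sum>j\<in>S. \<bar>x$j - y$j\<bar>)"
        using IH' by linarith
      then show "\<bar>u x - u y\<bar> \<le> lam / 2 * (\<Sum>j\<in>insert i S. \<bar>x$j - y$j\<bar>)"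
        using insert.hyps by (simp add: distrib_left)
    qed
  qed
  have "\<bar>u x - u y\<bar> \<le> lam / 2 * (\<Sum>i\<in>UNIV. \<bar>x$i - y$i\<bar>)" using main[of UNIV] by simp
  also have "(\<Sum>i\<in>UNIV. \<bar>x$i - y$i\<bar>) \<le> (\<Sum>i\<in>(UNIV::'d set). norm (x - y))"
    using component_le_norm_cart[of "x - y"] by (intro sum_mono) simp
  also have "\<dots> = CARD('d) * norm (x - y)" by simp
  finally show ?thesis using lam by (simp add: mult_left_mono mult.assoc)
qed



lemma lip1_real:
  fixes f :: "real \<Rightarrow> real"
  assumes d: "\<And>x. DERIV f x :> f' x" and b: "\<And>x. \<bar>f' x\<bar> \<le> 1"
  shows "\<bar>f a - f b\<bar> \<le> \<bar>a - b\<bar>"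
proof -
  have *: "\<bar>f y - f x\<bar> \<le> y - x" if xy: "x < y" for x y
  proof -
    obtain z where "f y - f x = (y - x) * f' z" using MVT2[of x y f f', OF xy] d by blast
    then have "\<bar>f y - f x\<bar> = (y - x) * \<bar>f' z\<bar>" using that by (simp add: abs_mult)
    also have "\<dots> \<le> (y - x) * 1" using that b[of z] by (intro mult_left_mono) auto
    finally show ?thesis by simp
  qed
  show ?thesis
  proof (cases a b rule: linorder_cases)
    case less then show ?thesis using *[OF less] by (simp add: abs_minus_commute)
  next
    case greater then show ?thesis using *[OF greater] by simp
  qed simp
qed

lemma cis_lip: "norm (cis a - cis b) \<le> 2 * \<bar>a - b\<bar>"
proof -
  have c: "\<bar>cos a - cos b\<bar> \<le> \<bar>a - b\<bar>"
    by (rule lip1_real[where f'="\<lambda>x. - sin x"]) (auto intro: derivative_eq_intros)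
  have s: "\<bar>sin a - sin b\<bar> \<le> \<bar>a - b\<bar>"
    by (rule lip1_real[where f'="\<lambda>x. cos x"]) (auto intro: derivative_eq_intros)
  have "norm (cis a - cis b) \<le> \<bar>Re (cis a - cis b)\<bar> + \<bar>Im (cis a - cis b)\<bar>" by (rule cmod_le)
  also have "\<dots> \<le> 2 * \<bar>a - b\<bar>" using c s by simp
  finally show ?thesis .
qed

definition Emap :: "real^'d \<Rightarrow> complex^'d" where "Emap x = (\<chi> i. cis (2 * pi * x$i))"

definition clmp :: "real \<Rightarrow> real" where "clmp t = max (-1) (min 1 t)"

definition ang :: "complex \<Rightarrow> real" where
  "ang z = (if 0 \<le> Im z then arccos (clmp (Re z)) / (2 * pi) else 1 - arccos (clmp (Re z)) / (2 * pi))"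

definition Gmap :: "complex^'d \<Rightarrow> real^'d" where "Gmap z = (\<chi> i. ang (z$i))"

lemma ang_cis:
  assumes t0: "0 \<le> t" and t1: "t < 1"
  shows "ang (cis (2 * pi * t)) = t"
proof -
  have cl: "clmp (cos x) = cos x" for x by (simp add: clmp_def)
  have pi0: "0 < pi" by (rule pi_gt_zero)
  have ang_eq: "ang (cis x) = (if 0 \<le> sin x then arccos (cos x) / (2 * pi) else 1 - arccos (cos x) / (2 * pi))" for x
    by (simp add: ang_def cl)
  show ?thesis
  proof (cases "t \<le> 1/2")
    case True
    have h1: "0 \<le> 2 * pi * t" using t0 pi0 by simp
    have "pi * (2 * t) \<le> pi * 1" using True pi0 by (intro mult_left_mono) auto
    then have h2: "2 * pi * t \<le> pi" by (simp add: mult.commute mult.left_commute)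
    have "0 \<le> sin (2 * pi * t)" by (rule sin_ge_zero[OF h1 h2])
    moreover have "arccos (cos (2 * pi * t)) = 2 * pi * t" by (rule arccos_cos[OF h1 h2])
    ultimately show ?thesis using pi0 by (simp add: ang_eq)
  next
    case False
    have "pi * 1 < pi * (2 * t)" using False pi0 by (intro mult_strict_left_mono) auto
    then have h1: "pi < 2 * pi * t" by (simp add: mult.commute mult.left_commute)
    have "pi * (2 * t) < pi * 2" using t1 pi0 by (intro mult_strict_left_mono) auto
    then have h2: "2 * pi * t < 2 * pi" by (simp add: mult.commute mult.left_commute)
    have "sin (2 * pi * t) < 0" by (rule sin_lt_zero[OF h1 h2])
    moreover have "cos (2 * pi * t) = cos (2 * pi - 2 * pi * (1 - t))" by (simp add: right_diff_distrib)
    then have "cos (2 * pi * t) = cos (2 * pi * (1 - t))" by (simp only: cos_2pi_minus)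
    moreover have "arccos (cos (2 * pi * (1 - t))) = 2 * pi * (1 - t)"
      using h1 h2 by (intro arccos_cos) (simp_all add: right_diff_distrib)
    moreover have "(2 * pi - 2 * pi * t) / (2 * pi) = 1 - t" using pi0 by (simp add: field_simps)
    ultimately show ?thesis by (simp add: ang_eq right_diff_distrib)
  qed
qed

lemma Gmap_Emap: 
  assumes "x \<in> unit_cell" shows "Gmap (Emap x) = x"
proof -
  have "Gmap (Emap x) $ i = x $ i" for i
  proof -
    have "0 \<le> x$i" "x$i < 1" using assms by (auto simp: unit_cell_def)
    then show ?thesis by (simp add: Gmap_def Emap_def ang_cis)
  qed
  then show ?thesis by (simp add: vec_eq_iff)
qed

lemma cont_clmp: "continuous_on UNIV (\<lambda>t. arccos (clmp t))"
proof -
  have "continuous_on UNIV clmp" unfolding clmp_def by (intro continuous_intros)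
  moreover have "clmp ` UNIV \<subseteq> {-1..1}" by (auto simp: clmp_def)
  ultimately show ?thesis
    by (rule continuous_on_compose2[OF continuous_on_arccos'])
qed

lemma ang_meas: "ang \<in> borel_measurable borel"
proof -
  have "continuous_on UNIV (\<lambda>z::complex. arccos (clmp (Re z)))"
    by (rule continuous_on_compose2[OF cont_clmp]) (auto intro!: continuous_intros)
  then have a: "(\<lambda>z. arccos (clmp (Re z)) / (2 * pi)) \<in> borel_measurable borel"
    by (intro borel_measurable_continuous_onI continuous_on_divide continuous_on_const) auto
  have b: "(\<lambda>z. 1 - arccos (clmp (Re z)) / (2 * pi)) \<in> borel_measurable borel"
    by (rule borel_measurable_diff[OF borel_measurable_const a])
  have c: "{z \<in> space borel. 0 \<le> Im z} \<in> sets borel"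
    by simp
  show ?thesis unfolding ang_def by (rule measurable_If[OF a b c])
qed

lemma Gmap_meas: "Gmap \<in> borel_measurable (borel :: (complex^'d) measure)"
proof -
  have "(\<lambda>z::complex^'d. Gmap z \<bullet> b) \<in> borel_measurable borel" if bB: "b \<in> Basis" for b
  proof -
    obtain i where b: "b = axis i 1" using axis_inverse[OF bB] by blast
    have "(\<lambda>z::complex^'d. z $ i) \<in> borel_measurable borel"
      by (intro borel_measurable_continuous_onI continuous_intros)
    then have "(\<lambda>z::complex^'d. ang (z $ i)) \<in> borel_measurable borel"
      using measurable_compose[OF _ ang_meas] by blast
    then show ?thesis by (simp add: b inner_axis Gmap_def)
  qed
  then show ?thesis by (subst borel_measurable_euclidean_space) blast
qed

lemma Emap_cont: "continuous_on UNIV Emap"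
  unfolding Emap_def by (intro continuous_intros)

lemma Emap_meas: "Emap \<in> borel_measurable borel"
  by (rule borel_measurable_continuous_onI[OF Emap_cont])

lemma Emap_periodic: "periodic (Emap :: real^'d \<Rightarrow> complex^'d)"
  unfolding periodic_def
proof (intro allI impI)
  fix x k :: "real^'d" assume k: "k \<in> int_lattice"
  have "cis (2 * pi * (x + k) $ i) = cis (2 * pi * x $ i)" for i
  proof -
    obtain m where m: "k $ i = of_int m" using k by (auto simp: int_lattice_def elim!: Ints_cases)
    have "cis (2 * pi * (x + k) $ i) = cis (2 * pi * x $ i + 2 * pi * of_int m)" by (simp add: m algebra_simps)
    also have "\<dots> = cis (2 * pi * x $ i) * cis (2 * pi * of_int m)" by (rule cis_mult[symmetric])
    also have "cis (2 * pi * of_int m) = 1" by (rule cis_multiple_2pi) simp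
    finally show ?thesis by simp
  qed
  then show "Emap (x + k) = Emap x" by (simp add: Emap_def vec_eq_iff)
qed

lemma Emap_lip: "norm (Emap x - Emap y) \<le> 4 * pi * CARD('d) * norm (x - y :: real^'d)"
proof -
  have "norm (Emap x - Emap y) \<le> (\<Sum>i\<in>UNIV. norm ((Emap x - Emap y) $ i))"
    unfolding norm_vec_def by (rule L2_set_le_sum) simp
  also have "\<dots> \<le> (\<Sum>i\<in>(UNIV::'d set). 4 * pi * norm (x - y))"
  proof (rule sum_mono)
    fix i
    have "norm ((Emap x - Emap y) $ i) = norm (cis (2 * pi * x$i) - cis (2 * pi * y$i))" by (simp add: Emap_def)
    also have "\<dots> \<le> 2 * \<bar>2 * pi * x$i - 2 * pi * y$i\<bar>" by (rule cis_lip)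
    also have "\<dots> = 2 * \<bar>2 * pi * (x$i - y$i)\<bar>" by (simp add: right_diff_distrib)
    also have "\<dots> = 4 * pi * \<bar>(x - y) $ i\<bar>" using pi_ge_zero by (simp add: abs_mult)
    also have "\<dots> \<le> 4 * pi * norm (x - y)" by (intro mult_left_mono component_le_norm_cart) auto
    finally show "norm ((Emap x - Emap y) $ i) \<le> 4 * pi * norm (x - y)" .
  qed
  also have "\<dots> = 4 * pi * CARD('d) * norm (x - y)" by simp
  finally show ?thesis .
qed

lemma unit_cell_borel: "unit_cell \<in> sets (borel :: (real^'d) measure)"
proof -
  have e: "unit_cell = (\<Inter>i\<in>UNIV. {x::real^'d. 0 \<le> x$i} \<inter> {x. x$i < 1})" by (auto simp: unit_cell_def)
  have h1: "{x::real^'d. 0 \<le> x$i} \<in> sets borel" for i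
    by (intro borel_closed closed_Collect_le continuous_intros)
  have h2: "{x::real^'d. x$i < 1} \<in> sets borel" for i
    by (intro borel_open open_Collect_less continuous_intros)
  have "(\<Inter>i\<in>(UNIV::'d set). {x::real^'d. 0 \<le> x$i} \<inter> {x. x$i < 1}) \<in> sets borel"
    using h1 h2 by (intro sets.finite_INT) auto
  then show ?thesis using e by simp
qed



lemma finite_open_unique:
  fixes M N :: "(complex^'d) measure"
  assumes fm: "finite_measure M" "finite_measure N" and sM: "sets M = sets borel" "sets N = sets borel"
    and eq: "\<And>h L. h \<in> borel_measurable borel \<Longrightarrow> (\<And>z. \<bar>h z\<bar> \<le> 1) \<Longrightarrow> 0 \<le> L \<Longrightarrow>
                 (\<And>z w. \<bar>h z - h w\<bar> \<le> L * dist z w) \<Longrightarrow> (\<integral>z. h z \<partial>M) = (\<integral>z. h z \<partial>N)"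
  shows "M = N"
proof -
  interpret M: finite_measure M by (rule fm(1))
  interpret N: finite_measure N by (rule fm(2))
  have spM: "space M = UNIV" using sets_eq_imp_space_eq[OF sM(1)] by simp
  have spN: "space N = UNIV" using sets_eq_imp_space_eq[OF sM(2)] by simp
  have meq: "measure M U = measure N U" if U: "open U" for U
  proof (cases "U = UNIV")
    case True
    have "(\<integral>z. (1::real) \<partial>M) = (\<integral>z. 1 \<partial>N)" by (rule eq[where h="\<lambda>_. 1" and L=0]) auto
    then show ?thesis using True spM spN by simp
  next
    case False
    define F where "F = - U"
    have F: "closed F" "F \<noteq> {}" using U False by (auto simp: F_def)
    define h where "h j z = min 1 (real j * infdist z F)" for j :: nat and z :: "complex^'d"
    have hm: "h j \<in> borel_measurable borel" for j
      unfolding h_def by (intro borel_measurable_continuous_onI continuous_intros)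
    have hb: "\<bar>h j z\<bar> \<le> 1" for j z
      using infdist_nonneg[of z F] by (simp add: h_def)
    have hl: "\<bar>h j z - h j w\<bar> \<le> real j * dist z w" for j z w
    proof -
      have "\<bar>h j z - h j w\<bar> \<le> \<bar>real j * infdist z F - real j * infdist w F\<bar>"
        unfolding h_def by linarith
      also have "\<dots> = real j * \<bar>infdist z F - infdist w F\<bar>" by (simp add: abs_mult flip: right_diff_distrib)
      also have "\<dots> \<le> real j * dist z w" by (intro mult_left_mono infdist_triangle_abs) auto
      finally show ?thesis .
    qed
    have heq: "(\<integral>z. h j z \<partial>M) = (\<integral>z. h j z \<partial>N)" for j
      by (rule eq[OF hm hb _ hl]) simp
    have lim: "(\<lambda>j. h j z) \<longlonglongrightarrow> indicator U z" for z
    proof (cases "z \<in> U")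
      case True
      then have d: "infdist z F > 0" using F by (intro infdist_pos_not_in_closed) (auto simp: F_def)
      obtain N0 :: nat where N0: "1 / infdist z F < N0" using reals_Archimedean2 by blast
      have "eventually (\<lambda>j. h j z = 1) sequentially"
        unfolding eventually_sequentially
      proof (intro exI allI impI)
        fix j assume "N0 \<le> j"
        then have "1 / infdist z F < real j" using N0 by linarith
        then have "1 \<le> real j * infdist z F" using d by (simp add: field_simps)
        then show "h j z = 1" by (simp add: h_def)
      qed
      then show ?thesis using True by (simp add: tendsto_eventually)
    next
      case False
      then have "z \<in> F" by (simp add: F_def)
      then show ?thesis using False by (simp add: h_def)
    qed
    have iU: "(indicator U :: complex^'d \<Rightarrow> real) \<in> borel_measurable borel"
      using U by (intro borel_measurable_indicator borel_open)
    have limM: "(\<lambda>j. \<integral>z. h j z \<partial>M) \<longlonglongrightarrow> (\<integral>z. indicator U z \<partial>M)"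
      by (rule integral_dominated_convergence[where w="\<lambda>_. 1"])
         (use hm sM lim hb iU in \<open>auto simp: measurable_cong_sets[OF sM(1) refl]\<close>)
    have limN: "(\<lambda>j. \<integral>z. h j z \<partial>N) \<longlonglongrightarrow> (\<integral>z. indicator U z \<partial>N)"
      by (rule integral_dominated_convergence[where w="\<lambda>_. 1"])
         (use hm sM lim hb iU in \<open>auto simp: measurable_cong_sets[OF sM(2) refl]\<close>)
    have "(\<integral>z. indicator U z \<partial>M) = (\<integral>z. indicator U z \<partial>N :: real)"
      using LIMSEQ_unique[OF limM] limN heq by simp
    then show ?thesis using spM spN by simp
  qed
  show ?thesis
  proof (rule measure_eqI_generator_eq[of "{S. open S}" UNIV M N "\<lambda>_. UNIV"])
    show "Int_stable {S. open S}" by (auto simp: Int_stable_def)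
    show "{S. open S} \<subseteq> Pow UNIV" by auto
    show "emeasure M X = emeasure N X" if "X \<in> {S. open S}" for X
    proof -
      have "X \<in> sets M" "X \<in> sets N" using that sM by auto
      then show ?thesis using meq[of X] that by (simp add: M.emeasure_eq_measure N.emeasure_eq_measure)
    qed
    show "sets M = sigma_sets UNIV {S. open S}" using sM(1) by (simp add: sets_borel)
    show "sets N = sigma_sets UNIV {S. open S}" using sM(2) by (simp add: sets_borel)
    show "range (\<lambda>_. UNIV) \<subseteq> {S. open S}" by auto
    show "(\<Union>i::nat. UNIV) = UNIV" by auto
    show "emeasure M UNIV \<noteq> \<infinity>" for i :: nat by simp
  qed
qed

lemma torus_measure_unique:
  fixes M N :: "(real^'d) measure"
  assumes fm: "finite_measure M" "finite_measure N" and sM: "sets M = sets borel" "sets N = sets borel"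
    and c: "emeasure M (- unit_cell) = 0" "emeasure N (- unit_cell) = 0"
    and eq: "\<And>H B L. H \<in> borel_measurable borel \<Longrightarrow> (\<And>x. \<bar>H x\<bar> \<le> B) \<Longrightarrow>
               (\<And>x y. \<bar>H x - H y\<bar> \<le> L * torus_dist x y) \<Longrightarrow> (\<integral>x. H x \<partial>M) = (\<integral>x. H x \<partial>N)"
  shows "M = N"
proof -
  have EM: "Emap \<in> measurable M borel" using measurable_cong_sets[OF sM(1) refl] Emap_meas by blast
  have EN: "Emap \<in> measurable N borel" using measurable_cong_sets[OF sM(2) refl] Emap_meas by blast
  have dd: "distr M borel Emap = distr N borel Emap"
  proof (rule finite_open_unique)
    show "finite_measure (distr M borel Emap)" using finite_measure.finite_measure_distr[OF fm(1) EM] .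
    show "finite_measure (distr N borel Emap)" using finite_measure.finite_measure_distr[OF fm(2) EN] .
    show "sets (distr M borel Emap) = sets borel" "sets (distr N borel Emap) = sets borel" by simp_all
  next
    fix h :: "complex^'d \<Rightarrow> real" and L :: real
    assume hm: "h \<in> borel_measurable borel" and hb: "\<And>z. \<bar>h z\<bar> \<le> 1" and L: "0 \<le> L"
      and hl: "\<And>z w. \<bar>h z - h w\<bar> \<le> L * dist z w"
    have Hm: "(\<lambda>x. h (Emap x)) \<in> borel_measurable borel"
      using measurable_compose[OF Emap_meas hm] by simp
    have Hp: "periodic (\<lambda>x. h (Emap x))"
      unfolding periodic_def
    proof (intro allI impI)
      fix x k :: "real^'d" assume k: "k \<in> int_lattice"
      have "Emap (x + k) = Emap x" using Emap_periodic k unfolding periodic_def by blast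
      then show "h (Emap (x + k)) = h (Emap x)" by simp
    qed
    have Hl: "\<bar>h (Emap x) - h (Emap y)\<bar> \<le> (L * (4 * pi * CARD('d))) * norm (x - y)" for x y :: "real^'d"
    proof -
      have "\<bar>h (Emap x) - h (Emap y)\<bar> \<le> L * dist (Emap x) (Emap y)" by (rule hl)
      also have "\<dots> \<le> L * (4 * pi * CARD('d) * norm (x - y))"
        using Emap_lip[of x y] L by (intro mult_left_mono) (auto simp: dist_norm)
      finally show ?thesis by (simp add: mult.assoc)
    qed
    have "(\<integral>x. h (Emap x) \<partial>M) = (\<integral>x. h (Emap x) \<partial>N)"
    proof -
      have nn: "0 \<le> L * (4 * pi * CARD('d))" using L by simp
      show ?thesis by (rule eq[where H="\<lambda>x. h (Emap x)", OF Hm hb periodic_lip_td[OF Hp nn Hl]])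
    qed
    then show "(\<integral>z. h z \<partial>distr M borel Emap) = (\<integral>z. h z \<partial>distr N borel Emap)"
      by (simp add: integral_distr[OF EM hm] integral_distr[OF EN hm])
  qed
  have bk: "distr (distr K borel Emap) borel Gmap = K"
    if sK: "sets K = sets borel" and cK: "emeasure K (- unit_cell) = 0" for K :: "(real^'d) measure"
  proof -
    have EK: "Emap \<in> measurable K borel" using measurable_cong_sets[OF sK refl] Emap_meas by blast
    have "distr (distr K borel Emap) borel Gmap = distr K borel (Gmap \<circ> Emap)"
      by (rule distr_distr[OF Gmap_meas EK])
    also have "\<dots> = distr K borel (\<lambda>x. x)"
    proof (rule distr_cong_AE)
      have nul: "- unit_cell \<in> null_sets K"
      proof -
        have "space borel - unit_cell \<in> sets (borel :: (real^'d) measure)" by (rule sets.compl_sets[OF unit_cell_borel])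
        then have "- unit_cell \<in> sets K" using sK by (simp add: Compl_eq_Diff_UNIV)
        then show ?thesis using cK by (simp add: null_sets_def)
      qed
      show "AE x in K. (Gmap \<circ> Emap) x = x"
        by (rule AE_I'[OF nul]) (auto simp: Gmap_Emap)
      show "Gmap \<circ> Emap \<in> measurable K borel" using measurable_comp[OF EK Gmap_meas] .
      show "(\<lambda>x. x) \<in> measurable K borel" by (rule measurable_ident_sets[OF sK])
    qed (simp add: sK)+
    also have "\<dots> = K" using distr_id2[of borel K] sK by simp
    finally show ?thesis .
  qed
  have "M = distr (distr M borel Emap) borel Gmap" using bk[OF sM(1) c(1)] by simp
  also have "\<dots> = distr (distr N borel Emap) borel Gmap" by (simp add: dd)
  also have "\<dots> = N" using bk[OF sM(2) c(2)] .
  finally show ?thesis .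
qed



lemma cell_measure: "emeasure lborel (unit_cell :: (real^'d) set) = 1"
proof -
  have a: "box 0 1 \<subseteq> (unit_cell :: (real^'d) set)"
    by (auto simp: unit_cell_def mem_box_cart less_imp_le)
  have b: "emeasure lborel (box 0 (1::real^'d)) = 1"
    by (subst emeasure_lborel_box) (auto simp: inner_axis Basis_vec_def Basis_real_def intro!: prod.neutral)
  have c: "emeasure lborel (cbox 0 (1::real^'d)) = 1"
    by (subst emeasure_lborel_cbox) (auto simp: inner_axis Basis_vec_def Basis_real_def intro!: prod.neutral)
  have "emeasure lborel (box 0 (1::real^'d)) \<le> emeasure lborel (unit_cell :: (real^'d) set)"
    using a unit_cell_borel by (intro emeasure_mono) auto
  moreover have "emeasure lborel (unit_cell :: (real^'d) set) \<le> emeasure lborel (cbox 0 (1::real^'d))"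
    using cell_cbox by (intro emeasure_mono) auto
  ultimately show ?thesis using b c by simp
qed

lemma conv_periodic:
  assumes "periodic W" shows "periodic (conv W \<rho>)"
  unfolding periodic_def conv_def
proof (intro allI impI)
  fix x k :: "real^'a" assume k: "k \<in> int_lattice"
  have "W (x + k - y) = W (x - y)" for y
  proof -
    have "W (x + k - y) = W ((x - y) + k)" by (simp add: algebra_simps)
    then show ?thesis using assms k by (simp add: periodic_def)
  qed
  then show "(\<integral>y. W (x + k - y) \<partial>\<rho>) = (\<integral>y. W (x - y) \<partial>\<rho>)" by simp
qed

lemma conv_lip:
  fixes W :: "real^'d \<Rightarrow> real"
  assumes ps: "prob_space \<rho>" and s: "sets \<rho> = sets borel" and Wm: "W \<in> borel_measurable borel"
    and WB: "\<And>x. \<bar>W x\<bar> \<le> B" and WL: "\<And>x y. \<bar>W x - W y\<bar> \<le> L * norm (x - y)"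
  shows "\<bar>conv W \<rho> x - conv W \<rho> y\<bar> \<le> L * norm (x - y)"
proof -
  interpret prob_space \<rho> by (rule ps)
  have m: "(\<lambda>z. W (a - z)) \<in> borel_measurable \<rho>" for a
  proof -
    have "(\<lambda>z::real^'d. a - z) \<in> borel_measurable borel"
      by (intro borel_measurable_continuous_onI continuous_intros)
    then have "(\<lambda>z. W (a - z)) \<in> borel_measurable borel" using measurable_compose[OF _ Wm] by blast
    then show ?thesis using measurable_cong_sets[OF s refl] by blast
  qed
  have i: "integrable \<rho> (\<lambda>z. W (a - z))" for a
    using m WB by (intro integrable_const_bound[where B=B]) auto
  have "\<bar>conv W \<rho> x - conv W \<rho> y\<bar> = \<bar>\<integral>z. W (x - z) - W (y - z) \<partial>\<rho>\<bar>"
    unfolding conv_def using i by simp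
  also have "\<dots> \<le> (\<integral>z. L * norm (x - y) \<partial>\<rho>)"
  proof (rule integral_abs_bound_integral)
    show "integrable \<rho> (\<lambda>z. W (x - z) - W (y - z))" using i by simp
    show "integrable \<rho> (\<lambda>z. L * norm (x - y))" by simp
    show "\<bar>W (x - z) - W (y - z)\<bar> \<le> L * norm (x - y)" for z
      using WL[of "x - z" "y - z"] by simp
  qed
  also have "\<dots> = L * norm (x - y)" by (simp add: prob_space)
  finally show ?thesis .
qed

lemma density_bounds:
  fixes f :: "real^'d \<Rightarrow> real"
  assumes pd: "pos_density \<rho> f" and ps: "prob_space \<rho>" and c: "\<And>x y. f x \<le> c * f y" and c0: "0 \<le> c"
  shows "f x \<le> c" "1 \<le> c * f x"
proof -
  define C where "C = (unit_cell :: (real^'d) set)"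
  have Cb: "C \<in> sets borel" unfolding C_def by (rule unit_cell_borel)
  have Cm: "emeasure lborel C = 1" unfolding C_def by (rule cell_measure)
  have fm: "f \<in> borel_measurable borel" and fp: "\<And>x. 0 < f x"
    and rho: "\<rho> = density lborel (\<lambda>x. ennreal (indicator C x * f x))"
    using pd by (auto simp: pos_density_def C_def)
  have im: "(\<lambda>x. ennreal (indicator C x * f x)) \<in> borel_measurable lborel"
  proof -
    have "(\<lambda>x. indicator C x * f x) \<in> borel_measurable borel"
      using fm Cb by (intro borel_measurable_times borel_measurable_indicator)
    then have "(\<lambda>x. ennreal (indicator C x * f x)) \<in> borel_measurable borel"
      using measurable_compose[OF _ measurable_ennreal] by blast
    then show ?thesis by simp
  qed
  have "emeasure \<rho> UNIV = 1" using prob_space.emeasure_space_1[OF ps] rho by simp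
  then have one: "(\<integral>\<^sup>+ y. ennreal (indicator C y * f y) \<partial>lborel) = 1"
    using emeasure_density[OF im, of UNIV] rho by simp
  have ic: "(\<integral>\<^sup>+ y. ennreal (indicator C y) \<partial>lborel) = 1"
  proof -
    have "(\<integral>\<^sup>+ y. ennreal (indicator C y) \<partial>lborel) = (\<integral>\<^sup>+ y. indicator C y \<partial>lborel)"
      by (simp add: ennreal_indicator)
    also have "\<dots> = emeasure lborel C"
      by (rule nn_integral_indicator) (simp add: Cb)
    also have "\<dots> = 1" by (rule Cm)
    finally show ?thesis .
  qed
  have "ennreal (f x) = (\<integral>\<^sup>+ y. ennreal (f x) * ennreal (indicator C y) \<partial>lborel)"
    using ic Cb by (subst nn_integral_cmult) auto
  also have "\<dots> \<le> (\<integral>\<^sup>+ y. ennreal c * ennreal (indicator C y * f y) \<partial>lborel)"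
  proof (rule nn_integral_mono)
    fix y
    have "f x * indicator C y \<le> c * (indicator C y * f y)"
      using c[of x y] by (auto simp: indicator_def)
    moreover have "ennreal (f x) * ennreal (indicator C y) = ennreal (f x * indicator C y)"
      using fp[of x] by (intro ennreal_mult[symmetric]) auto
    moreover have "ennreal c * ennreal (indicator C y * f y) = ennreal (c * (indicator C y * f y))"
      using c0 fp[of y] by (intro ennreal_mult[symmetric]) auto
    ultimately show "ennreal (f x) * ennreal (indicator C y) \<le> ennreal c * ennreal (indicator C y * f y)"
      by (simp add: ennreal_leI)
  qed
  also have "\<dots> = ennreal c" using one im by (subst nn_integral_cmult) auto
  finally show "f x \<le> c" using c0 by (simp add: ennreal_le_iff)
  have "(1::ennreal) = (\<integral>\<^sup>+ y. ennreal (indicator C y * f y) \<partial>lborel)" using one by simp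
  also have "\<dots> \<le> (\<integral>\<^sup>+ y. ennreal (c * f x) * ennreal (indicator C y) \<partial>lborel)"
  proof (rule nn_integral_mono)
    fix y
    have "indicator C y * f y \<le> c * f x * indicator C y"
      using c[of y x] by (auto simp: indicator_def)
    moreover have "ennreal (c * f x) * ennreal (indicator C y) = ennreal (c * f x * indicator C y)"
      using c0 fp[of x] by (intro ennreal_mult[symmetric]) auto
    ultimately show "ennreal (indicator C y * f y) \<le> ennreal (c * f x) * ennreal (indicator C y)"
      by (simp add: ennreal_leI)
  qed
  also have "\<dots> = ennreal (c * f x)" using ic Cb by (subst nn_integral_cmult) auto
  finally show "1 \<le> c * f x" using c0 fp by (simp add: ennreal_le_iff)
qed



lemma periodic_add: "periodic f \<Longrightarrow> periodic g \<Longrightarrow> periodic (\<lambda>x. f x + g x)"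
  by (simp add: periodic_def)

lemma periodic_comp: "periodic f \<Longrightarrow> periodic (\<lambda>x. h (f x))"
  by (simp add: periodic_def)

theorem mainTheorem6:
  fixes V W :: "real^'d \<Rightarrow> real"
    and \<rho>s :: "nat \<Rightarrow> (real^'d) measure" and \<rho> :: "(real^'d) measure"
    and lams :: "nat \<Rightarrow> real" and lam0 :: real
  assumes "C21_torus V" and "C21_torus W"
    and "\<And>n. torus_prob (\<rho>s n)" and "torus_prob \<rho>"
    and "(\<lambda>n. W2 (\<rho>s n) \<rho>) \<longlonglongrightarrow> 0"
    and "\<And>n. 0 \<le> lams n" and "lams \<longlonglongrightarrow> lam0" and "0 \<le> lam0"
    and "\<And>n. hess_lower_bound V W (\<rho>s n) (lams n)"
  shows "hess_lower_bound V W \<rho> lam0"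
proof -
  note tp = assms(3) assms(4)
  have Vper: "periodic V" and Vm: "V \<in> borel_measurable borel" using C21_props[OF assms(1)] by auto
  obtain VB where VB: "\<And>x. \<bar>V x\<bar> \<le> VB" using C21_props(4)[OF assms(1)] by blast
  obtain VL where VL: "0 \<le> VL" "\<And>x y. \<bar>V x - V y\<bar> \<le> VL * norm (x - y)" using C21_props(5)[OF assms(1)] by blast
  have Wper: "periodic W" and Wm: "W \<in> borel_measurable borel" using C21_props[OF assms(2)] by auto
  obtain WB where WB: "\<And>x. \<bar>W x\<bar> \<le> WB" using C21_props(4)[OF assms(2)] by blast
  obtain WL where WL: "0 \<le> WL" "\<And>x y. \<bar>W x - W y\<bar> \<le> WL * norm (x - y)" using C21_props(5)[OF assms(2)] by blast
  have "\<forall>n. \<exists>f. pos_density (\<rho>s n) f \<and> convex_on UNIV (\<lambda>x. u_pot V W (\<rho>s n) f x + lams n / 2 * (norm x)\<^sup>2)"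
    using assms(9) unfolding hess_lower_bound_def by blast
  from choice[OF this] obtain fs where fs: "\<And>n. pos_density (\<rho>s n) (fs n)"
    "\<And>n. convex_on UNIV (\<lambda>x. u_pot V W (\<rho>s n) (fs n) x + lams n / 2 * (norm x)\<^sup>2)" by blast
  obtain Lam where Lam: "\<And>n. lams n \<le> Lam" "0 \<le> Lam"
  proof -
    have "Bseq lams" using assms(7) by (intro convergent_imp_Bseq convergentI)
    then obtain K where "0 < K" "\<And>n. norm (lams n) \<le> K" by (auto elim: BseqE)
    then show ?thesis using that[of K] by (auto simp: abs_le_iff)
  qed
  have ps: "\<And>n. prob_space (\<rho>s n)" "\<And>n. sets (\<rho>s n) = sets borel"
    using tp(1) by (auto simp: torus_prob_def)
  have fpos: "\<And>n x. 0 < fs n x" and fm: "\<And>n. fs n \<in> borel_measurable borel"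
    and fper: "\<And>n. periodic (fs n)"
    and fdens: "\<And>n. \<rho>s n = density lborel (\<lambda>x. ennreal (indicator unit_cell x * fs n x))"
    using fs(1) by (auto simp: pos_density_def)
  define K where "K = Lam / 2 * CARD('d) + VL + WL"
  have K0: "0 \<le> K" using Lam VL WL by (simp add: K_def)
  define g where "g n x = ln (fs n x)" for n x
  have gper: "periodic (g n)" for n unfolding g_def by (rule periodic_comp[OF fper])
  have glip: "\<bar>g n x - g n y\<bar> \<le> K * norm (x - y)" for n x y
  proof -
    let ?u = "u_pot V W (\<rho>s n) (fs n)"
    have uper: "periodic ?u" unfolding u_pot_def
      by (intro periodic_add periodic_comp[OF fper] Vper conv_periodic[OF Wper])
    have "\<bar>?u x - ?u y\<bar> \<le> lams n / 2 * CARD('d) * norm (x - y)"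
      by (rule semiconv_lip[OF fs(2) uper assms(6)])
    also have "\<dots> \<le> Lam / 2 * CARD('d) * norm (x - y)"
      using Lam(1)[of n] by (intro mult_right_mono) auto
    finally have u: "\<bar>?u x - ?u y\<bar> \<le> Lam / 2 * CARD('d) * norm (x - y)" .
    have c: "\<bar>conv W (\<rho>s n) x - conv W (\<rho>s n) y\<bar> \<le> WL * norm (x - y)"
      by (rule conv_lip[OF ps(1) ps(2) Wm WB WL(2)])
    have "g n x - g n y = (?u x - ?u y) - (V x - V y) - (conv W (\<rho>s n) x - conv W (\<rho>s n) y)"
      by (simp add: g_def u_pot_def)
    then have "\<bar>g n x - g n y\<bar> \<le> Lam / 2 * CARD('d) * norm (x - y) + VL * norm (x - y) + WL * norm (x - y)"
      using u c VL(2)[of x y] by linarith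
    then show ?thesis by (simp add: K_def distrib_right)
  qed
  define Mo where "Mo = K * CARD('d)"
  have gosc: "\<bar>g n x - g n y\<bar> \<le> Mo" for n x y
  proof -
    have "g n x = g n (x - flr x)" "g n y = g n (y - flr y)"
      using periodic_diff[OF gper flr_lattice] by auto
    moreover have "norm ((x - flr x) - (y - flr y)) \<le> CARD('d)"
      by (rule cell_diff_norm[OF sub_flr_cell sub_flr_cell])
    ultimately have "\<bar>g n x - g n y\<bar> \<le> K * CARD('d)"
      using glip[of n "x - flr x" "y - flr y"] K0 mult_left_mono[of "norm ((x - flr x) - (y - flr y))" "CARD('d)" K]
      by linarith
    then show ?thesis by (simp add: Mo_def)
  qed
  have fexp: "fs n x = exp (g n x)" for n x using fpos by (simp add: g_def)
  have fcmp: "fs n x \<le> exp Mo * fs n y" for n x y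
  proof -
    have "fs n x = exp (g n x)" by (rule fexp)
    also have "\<dots> \<le> exp (Mo + g n y)" using gosc[of n x y] by simp
    also have "\<dots> = exp Mo * fs n y" by (simp add: exp_add fexp)
    finally show ?thesis .
  qed
  have fub: "fs n x \<le> exp Mo" and flb: "1 \<le> exp Mo * fs n x" for n x
    using density_bounds[OF fs(1) ps(1) fcmp] by auto
  have gb: "\<bar>g n x\<bar> \<le> Mo" for n x
  proof -
    have "g n x \<le> Mo"
    proof -
      have "ln (fs n x) \<le> ln (exp Mo)" using fub[of n x] fpos[of n x] by (subst ln_le_cancel_iff) auto
      then show ?thesis by (simp add: g_def)
    qed
    moreover have "- Mo \<le> g n x"
    proof -
      have "exp (- Mo) \<le> fs n x" using flb[of n x] by (simp add: exp_minus field_simps)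
      then show ?thesis using fpos[of n x] by (simp add: g_def ln_ge_iff)
    qed
    ultimately show ?thesis by simp
  qed
  obtain G r where Gc: "continuous_on (cbox 0 1) G" and r: "strict_mono (r :: nat \<Rightarrow> nat)"
    and unif: "\<And>e. 0 < e \<Longrightarrow> \<exists>N. \<forall>n x. n \<ge> N \<and> x \<in> cbox 0 1 \<longrightarrow> norm (g (r n) x - G x) < e"
  proof (rule Arzela_Ascoli[of "cbox 0 1" g Mo])
    show "compact (cbox 0 (1::real^'d))" by (rule compact_cbox)
    show "norm (g n x) \<le> Mo" for n x using gb by simp
    show "\<exists>d>0. \<forall>n y. y \<in> cbox 0 1 \<and> norm (x - y) < d \<longrightarrow> norm (g n x - g n y) < e"
      if "x \<in> cbox 0 1" "0 < e" for x e
    proof (intro exI conjI allI impI)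
      show "0 < e / (K + 1)" using that K0 by simp
      fix n y assume "y \<in> cbox 0 1 \<and> norm (x - y) < e / (K + 1)"
      then have ny: "norm (x - y) < e / (K + 1)" by simp
      have "norm (g n x - g n y) \<le> K * norm (x - y)" using glip by simp
      also have "\<dots> \<le> K * (e / (K + 1))" using ny K0 by (intro mult_left_mono) auto
      also have "\<dots> < e" using K0 that(2) by (simp add: field_simps)
      finally show "norm (g n x - g n y) < e" .
    qed
  qed blast
  define ginf where "ginf x = G (x - flr x)" for x
  have gconv: "(\<lambda>j. g (r j) x) \<longlonglongrightarrow> ginf x" for x
  proof (rule LIMSEQ_I)
    fix e :: real assume e: "0 < e"
    obtain N where N: "\<And>n z. n \<ge> N \<Longrightarrow> z \<in> cbox 0 1 \<Longrightarrow> norm (g (r n) z - G z) < e"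
      using unif[OF e] by blast
    have xc: "x - flr x \<in> cbox 0 1" using sub_flr_cell cell_cbox by blast
    have "norm (g (r n) x - ginf x) < e" if "n \<ge> N" for n
      using N[OF that xc] periodic_diff[OF gper flr_lattice, of "r n" x] by (simp add: ginf_def)
    then show "\<exists>no. \<forall>n\<ge>no. norm (g (r n) x - ginf x) < e" by blast
  qed
  define finf where "finf x = exp (ginf x)" for x
  have fconv: "(\<lambda>j. fs (r j) x) \<longlonglongrightarrow> finf x" for x
    unfolding finf_def fexp by (intro tendsto_exp gconv)
  have ginf_per: "periodic ginf"
    unfolding periodic_def
  proof (intro allI impI)
    fix x k :: "real^'d" assume k: "k \<in> int_lattice"
    have "(\<lambda>j. g (r j) (x + k)) = (\<lambda>j. g (r j) x)" using gper k by (simp add: periodic_def)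
    then show "ginf (x + k) = ginf x" using gconv[of "x + k"] gconv[of x] LIMSEQ_unique by metis
  qed
  have finf_per: "periodic finf" unfolding finf_def by (rule periodic_comp[OF ginf_per])
  have finf_m: "finf \<in> borel_measurable borel"
    by (rule borel_measurable_LIMSEQ_real[OF fconv]) (rule fm)
  have finf_pos: "0 < finf x" for x by (simp add: finf_def)
  have finf_ub: "finf x \<le> exp Mo" for x
    by (rule LIMSEQ_le_const2[OF fconv]) (use fub in auto)
  have Wr: "(\<lambda>j. W2 (\<rho>s (r j)) \<rho>) \<longlonglongrightarrow> 0"
    using LIMSEQ_subseq_LIMSEQ[OF assms(5) r] by (simp add: comp_def)
  have conv_lim: "(\<lambda>j. conv W (\<rho>s (r j)) x) \<longlonglongrightarrow> conv W \<rho> x" for x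
  proof -
    have hm: "(\<lambda>y. W (x - y)) \<in> borel_measurable borel"
    proof -
      have "(\<lambda>y::real^'d. x - y) \<in> borel_measurable borel"
        by (intro borel_measurable_continuous_onI continuous_intros)
      then show ?thesis using measurable_compose[OF _ Wm] by blast
    qed
    have hp: "periodic (\<lambda>y. W (x - y))"
      unfolding periodic_def
    proof (intro allI impI)
      fix y k :: "real^'d" assume k: "k \<in> int_lattice"
      have "W (x - (y + k)) = W ((x - y) - k)" by (simp add: algebra_simps)
      then show "W (x - (y + k)) = W (x - y)" using periodic_diff[OF Wper k] by simp
    qed
    have hl: "\<bar>W (x - y) - W (x - y')\<bar> \<le> WL * norm (y - y')" for y y'
      using WL(2)[of "x - y" "x - y'"] by (simp add: norm_minus_commute)
    show ?thesis unfolding conv_def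
      using W2_weak[OF tp(1) tp(2) Wr hm WB periodic_lip_td[OF hp WL(1) hl]] by simp
  qed
  have rho_eq: "\<rho> = density lborel (\<lambda>x. ennreal (indicator unit_cell x * finf x))"
  proof -
    define C where "C = (unit_cell :: (real^'d) set)"
    define \<nu> where "\<nu> = density lborel (\<lambda>x. ennreal (indicator C x * finf x))"
    have Cb: "C \<in> sets borel" unfolding C_def by (rule unit_cell_borel)
    have Cm: "emeasure lborel C = 1" unfolding C_def by (rule cell_measure)
    have dm: "(\<lambda>x. indicator C x * h x) \<in> borel_measurable borel"
      if "h \<in> borel_measurable borel" for h :: "real^'d \<Rightarrow> real"
      using that Cb by (intro borel_measurable_times borel_measurable_indicator)
    have dmE: "(\<lambda>x. ennreal (indicator C x * h x)) \<in> borel_measurable lborel"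
      if "h \<in> borel_measurable borel" for h :: "real^'d \<Rightarrow> real"
      using measurable_compose[OF dm[OF that] measurable_ennreal] by simp
    have s\<nu>: "sets \<nu> = sets borel" by (simp add: \<nu>_def)
    have sp\<nu>: "space \<nu> = UNIV" by (simp add: \<nu>_def)
    have fm\<nu>: "finite_measure \<nu>"
    proof (rule finite_measureI)
      have "emeasure \<nu> UNIV = (\<integral>\<^sup>+ x. ennreal (indicator C x * finf x) * indicator UNIV x \<partial>lborel)"
        unfolding \<nu>_def by (rule emeasure_density[OF dmE[OF finf_m]]) simp
      also have "\<dots> \<le> (\<integral>\<^sup>+ x. ennreal (exp Mo) * indicator C x \<partial>lborel)"
      proof (rule nn_integral_mono)
        fix x
        have "indicator C x * finf x \<le> exp Mo * indicator C x"
          using finf_ub[of x] by (auto simp: indicator_def)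
        then have "ennreal (indicator C x * finf x) \<le> ennreal (exp Mo * indicator C x)" by (rule ennreal_leI)
        also have "\<dots> = ennreal (exp Mo) * indicator C x" by (simp add: ennreal_mult ennreal_indicator)
        finally show "ennreal (indicator C x * finf x) * indicator UNIV x \<le> ennreal (exp Mo) * indicator C x" by simp
      qed
      also have "\<dots> = ennreal (exp Mo) * emeasure lborel C" using Cb by (subst nn_integral_cmult) auto
      also have "\<dots> < \<infinity>" using Cm by (simp add: ennreal_mult_less_top)
      finally show "emeasure \<nu> (space \<nu>) \<noteq> \<infinity>" using sp\<nu> by simp
    qed
    have c\<nu>: "emeasure \<nu> (- C) = 0"
    proof -
      have "- C \<in> sets lborel" using Cb by (simp add: Compl_eq_Diff_UNIV sets.compl_sets)
      then have "emeasure \<nu> (- C) = (\<integral>\<^sup>+ x. ennreal (indicator C x * finf x) * indicator (- C) x \<partial>lborel)"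
        unfolding \<nu>_def by (rule emeasure_density[OF dmE[OF finf_m]])
      also have "\<dots> = 0"
      proof -
        have z: "(\<lambda>x. ennreal (indicator C x * finf x) * indicator (- C) x) = (\<lambda>x. 0)"
          by (rule ext) (auto simp: indicator_def)
        show ?thesis by (simp only: z) simp
      qed
      finally show ?thesis .
    qed
    have s\<rho>: "sets \<rho> = sets borel" and c\<rho>: "emeasure \<rho> (- C) = 0"
      using tp(2) by (auto simp: torus_prob_def C_def)
    have fm\<rho>: "finite_measure \<rho>" using tp(2) unfolding torus_prob_def prob_space_def by blast
    have "\<rho> = \<nu>"
    proof (rule torus_measure_unique[OF fm\<rho> fm\<nu> s\<rho> s\<nu> c\<rho>[unfolded C_def] c\<nu>[unfolded C_def]])
      fix H :: "real^'d \<Rightarrow> real" and B L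
      assume Hm: "H \<in> borel_measurable borel" and Hb: "\<And>x. \<bar>H x\<bar> \<le> B"
        and Hl: "\<And>x y. \<bar>H x - H y\<bar> \<le> L * torus_dist x y"
      have B0: "0 \<le> B" using Hb[of 0] by simp
      have HmL: "H \<in> borel_measurable lborel" using Hm by simp
      have lim1: "(\<lambda>j. \<integral>x. H x \<partial>\<rho>s (r j)) \<longlonglongrightarrow> (\<integral>x. H x \<partial>\<rho>)"
        by (rule W2_weak[OF tp(1) tp(2) Wr Hm Hb Hl])
      have dens: "(\<integral>x. H x \<partial>density lborel (\<lambda>x. ennreal (indicator C x * h x)))
                   = (\<integral>x. indicator C x * h x * H x \<partial>lborel)"
        if "h \<in> borel_measurable borel" "\<And>x. 0 < h x" for h
      proof -
        have "(\<lambda>x. indicator C x * h x) \<in> borel_measurable lborel" using dm[OF that(1)] by simp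
        moreover have "AE x in lborel. 0 \<le> indicator C x * h x" using that(2) by (simp add: less_imp_le)
        ultimately show ?thesis using integral_density[OF HmL] by simp
      qed
      have e1: "(\<integral>x. H x \<partial>\<rho>s n) = (\<integral>x. indicator C x * fs n x * H x \<partial>lborel)" for n
        using dens[OF fm fpos] fdens[of n] by (simp add: C_def)
      have e2: "(\<integral>x. H x \<partial>\<nu>) = (\<integral>x. indicator C x * finf x * H x \<partial>lborel)"
        using dens[OF finf_m finf_pos] by (simp add: \<nu>_def)
      have lim2: "(\<lambda>j. \<integral>x. indicator C x * fs (r j) x * H x \<partial>lborel) \<longlonglongrightarrow> (\<integral>x. indicator C x * finf x * H x \<partial>lborel)"
      proof (rule integral_dominated_convergence[where w="\<lambda>x. (exp Mo * B) * indicator C x"])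
        show "(\<lambda>x. indicator C x * finf x * H x) \<in> borel_measurable lborel"
          using dm[OF finf_m] Hm by simp
        show "(\<lambda>x. indicator C x * fs (r j) x * H x) \<in> borel_measurable lborel" for j
          using dm[OF fm] Hm by simp
        have "integrable lborel (indicator C :: real^'d \<Rightarrow> real)"
          using Cb Cm by (simp add: integrable_indicator_iff)
        then show "integrable lborel (\<lambda>x. (exp Mo * B) * indicator C x)" by (rule integrable_mult_right)
        show "AE x in lborel. (\<lambda>j. indicator C x * fs (r j) x * H x) \<longlonglongrightarrow> indicator C x * finf x * H x"
          by (intro AE_I2 tendsto_mult tendsto_const fconv)
        show "AE x in lborel. norm (indicator C x * fs (r j) x * H x) \<le> exp Mo * B * indicator C x" for j
        proof (intro AE_I2)
          fix x
          have "\<bar>fs (r j) x * H x\<bar> \<le> exp Mo * B"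
            using fub[of "r j" x] fpos[of "r j" x] Hb[of x] B0
            by (simp add: abs_mult mult_mono)
          then show "norm (indicator C x * fs (r j) x * H x) \<le> exp Mo * B * indicator C x"
            by (auto simp: indicator_def mult.assoc)
        qed
      qed
      show "(\<integral>x. H x \<partial>\<rho>) = (\<integral>x. H x \<partial>\<nu>)"
        using LIMSEQ_unique[OF lim1] lim2 e1 e2 by simp
    qed
    then show ?thesis by (simp add: \<nu>_def C_def)
  qed
  have pd: "pos_density \<rho> finf"
    unfolding pos_density_def using finf_m finf_per finf_pos rho_eq by blast
  have cvx: "convex_on UNIV (\<lambda>x. u_pot V W \<rho> finf x + lam0 / 2 * (norm x)\<^sup>2)"
  proof -
    define F where "F j x = u_pot V W (\<rho>s (r j)) (fs (r j)) x + lams (r j) / 2 * (norm x)\<^sup>2" for j x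
    have Flim: "(\<lambda>j. F j x) \<longlonglongrightarrow> u_pot V W \<rho> finf x + lam0 / 2 * (norm x)\<^sup>2" for x
    proof -
      have l1: "(\<lambda>j. ln (fs (r j) x)) \<longlonglongrightarrow> ln (finf x)" using gconv[of x] by (simp add: g_def finf_def)
      have l2: "(\<lambda>j. lams (r j)) \<longlonglongrightarrow> lam0" using LIMSEQ_subseq_LIMSEQ[OF assms(7) r] by (simp add: comp_def)
      have A: "(\<lambda>j. ln (fs (r j) x) + V x + conv W (\<rho>s (r j)) x) \<longlonglongrightarrow> ln (finf x) + V x + conv W \<rho> x"
        by (intro tendsto_add l1 tendsto_const conv_lim)
      have B: "(\<lambda>j. lams (r j) / 2 * (norm x)\<^sup>2) \<longlonglongrightarrow> lam0 / 2 * (norm x)\<^sup>2"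
        by (intro tendsto_mult tendsto_divide l2 tendsto_const) auto
      show ?thesis unfolding F_def u_pot_def by (rule tendsto_add[OF A B])
    qed
    show ?thesis
    proof (rule convex_onI)
      show "convex (UNIV :: (real^'d) set)" by simp
      fix t :: real and a b :: "real^'d" assume t: "0 < t" "t < 1"
      have le: "F j ((1 - t) *\<^sub>R a + t *\<^sub>R b) \<le> (1 - t) * F j a + t * F j b" for j
        unfolding F_def using t by (intro convex_onD[OF fs(2)]) auto
      have Ylim: "(\<lambda>j. (1 - t) * F j a + t * F j b) \<longlonglongrightarrow>
          (1 - t) * (u_pot V W \<rho> finf a + lam0 / 2 * (norm a)\<^sup>2) + t * (u_pot V W \<rho> finf b + lam0 / 2 * (norm b)\<^sup>2)"
        by (intro tendsto_add tendsto_mult tendsto_const Flim)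
      show "u_pot V W \<rho> finf ((1 - t) *\<^sub>R a + t *\<^sub>R b) + lam0 / 2 * (norm ((1 - t) *\<^sub>R a + t *\<^sub>R b))\<^sup>2
          \<le> (1 - t) * (u_pot V W \<rho> finf a + lam0 / 2 * (norm a)\<^sup>2) + t * (u_pot V W \<rho> finf b + lam0 / 2 * (norm b)\<^sup>2)"
        by (rule LIMSEQ_le[OF Flim Ylim]) (use le in blast)
    qed
  qed
  show ?thesis unfolding hess_lower_bound_def using pd cvx by blast
qed

end
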